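(* Let $P\in\mathbb{R}^{p\times m}$, $Y_d\in\mathbb{R}^p$, plant $Y_k=PU_k+N_k$, $E_k=Y_d-Y_k$, $\bar U_k=-\Delta U_k$, $D_k=-\Delta N_k$ (so $E_{k+1}=E_k+P\bar U_k+D_k$), $\bar B=\begin{bmatrix}P\\0\end{bmatrix}$, $\bar L\in\mathbb{R}^{2p\times p}$, and the ESO $\hat{\bar X}_{k+1}=(\bar A-\bar L\bar C)\hat{\bar X}_k+\bar B\bar U_k+\bar LE_k$, $\hat{\bar X}_k=\begin{bmatrix}\hat E_k\\\hat D_k\end{bmatrix}$, so $\hat D_k=F\hat{\bar X}_k$. Let $K,H\in\mathbb{R}^{m\times p}$ and apply $\bar U_k=-KE_k-H\hat D_k$. Then $\begin{bmatrix}E_{k+1}\\\hat{\bar X}_{k+1}\end{bmatrix}=G\begin{bmatrix}E_{k}\\\hat{\bar X}_{k}\end{bmatrix}+\begin{bmatrix}I\\0\end{bmatrix}D_k$ with $G=\begin{bmatrix}I-PK&-PHF\\\bar L-\bar BK&\bar A-\bar L\bar C-\bar BHF\end{bmatrix}$, and with $T=\begin{bmatrix}I&0\\-\bar C^{\top}&I\end{bmatrix}$ one has $TGT^{-1}=\begin{bmatrix}I-PK&-PHF\\0&\bar A-\bar L\bar C\end{bmatrix}$. Hence the eigenvalues of $G$ are those of $I-PK$ together with those of $\bar A-\bar L\bar C$ (separation principle), and the gains $K$, $H$, $\bar L$ can be synthesized separately from each other.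
   Context: $\mathbb{Z}_+=\{0,1,2,\dots\}$; $\Delta f_k=f_{k+1}-f_k$. $U_k\in\mathbb{R}^m$ input, $Y_k\in\mathbb{R}^p$ output, $(N_k)\subset\mathbb{R}^p$ bounded uncertainty. $\bar A=\begin{bmatrix}I_p&I_p\\0&I_p\end{bmatrix}$, $\bar C=\begin{bmatrix}I_p&0\end{bmatrix}$, $F=\begin{bmatrix}0&I_p\end{bmatrix}$. *)

theory Defs
  imports "Jordan_Normal_Form.Matrix" "Jordan_Normal_Form.Char_Poly"
begin

definition Abar :: "nat \<Rightarrow> real mat" where
  "Abar p = four_block_mat (1\<^sub>m p) (1\<^sub>m p) (0\<^sub>m p p) (1\<^sub>m p)"

definition Cbar :: "nat \<Rightarrow> real mat" where
  "Cbar p = mat p (2*p) (\<lambda>(i,j). if j = i then 1 else 0)"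

definition Fm :: "nat \<Rightarrow> real mat" where
  "Fm p = mat p (2*p) (\<lambda>(i,j). if j = i + p then 1 else 0)"

definition Bbar :: "nat \<Rightarrow> nat \<Rightarrow> real mat \<Rightarrow> real mat" where
  "Bbar p m P = mat (2*p) m (\<lambda>(i,j). if i < p then P $$ (i,j) else 0)"

definition Gcl :: "nat \<Rightarrow> nat \<Rightarrow> real mat \<Rightarrow> real mat \<Rightarrow> real mat \<Rightarrow> real mat \<Rightarrow> real mat" where
  "Gcl p m P K H L = four_block_mat
     (1\<^sub>m p - P * K)          (- (P * H * Fm p))
     (L - Bbar p m P * K)     (Abar p - L * Cbar p - Bbar p m P * H * Fm p)"

definition Tm :: "nat \<Rightarrow> real mat" where
  "Tm p = four_block_mat (1\<^sub>m p) (0\<^sub>m p (2*p)) (- transpose_mat (Cbar p)) (1\<^sub>m (2*p))"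

definition Tinv :: "nat \<Rightarrow> real mat" where
  "Tinv p = four_block_mat (1\<^sub>m p) (0\<^sub>m p (2*p)) (transpose_mat (Cbar p)) (1\<^sub>m (2*p))"

definition cspec :: "real mat \<Rightarrow> complex set" where
  "cspec A = {z. eigenvalue (map_mat complex_of_real A) z}"

end

theory Submission imports Defs begin
lemma ifm1[simp]: "(if b then 1 else 0) * (x::real) = (if b then x else 0)" by simp
lemma ifm2[simp]: "(x::real) * (if b then 1 else 0) = (if b then x else 0)" by simp
lemma FC: "Fm p * transpose_mat (Cbar p) = 0\<^sub>m p p"
  by (rule eq_matI) (auto simp: Fm_def Cbar_def scalar_prod_def sum.delta')
lemma CC: "Cbar p * transpose_mat (Cbar p) = 1\<^sub>m p"
  by (rule eq_matI) (auto simp: Cbar_def scalar_prod_def sum.delta')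
lemma AC: "Abar p * transpose_mat (Cbar p) = transpose_mat (Cbar p)"
  by (rule eq_matI) (auto simp: Abar_def Cbar_def scalar_prod_def sum.delta')
lemma CP: assumes "P \<in> carrier_mat p m" shows "transpose_mat (Cbar p) * P = Bbar p m P"
  using assms by (intro eq_matI) (auto simp: Bbar_def Cbar_def scalar_prod_def sum.delta')

lemma mult_uminus_mat_vec: "(A::real mat) \<in> carrier_mat nr nc \<Longrightarrow> v \<in> carrier_vec nc \<Longrightarrow> A *\<^sub>v (- v) = - (A *\<^sub>v v)"
  by (intro eq_vecI) auto

lemma mv_carrier[simp]: "dim_row A = nr \<Longrightarrow> A *\<^sub>v v \<in> carrier_vec nr"
  by (simp add: carrier_vecI)

lemma assoc_mv'[simp]: "dim_col A = dim_row B \<Longrightarrow> dim_vec v = dim_col B \<Longrightarrow> (A * B) *\<^sub>v v = A *\<^sub>v (B *\<^sub>v v)"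
  by (rule assoc_mult_mat_vec[of A "dim_row A" "dim_col A" B "dim_col B"]) (auto intro: carrier_matI carrier_vecI)

lemma assoc_mm'[simp]: "dim_col A = dim_row B \<Longrightarrow> dim_col B = dim_row C \<Longrightarrow> (A * B) * C = A * (B * C)"
  by (rule assoc_mult_mat[of A "dim_row A" "dim_col A" B "dim_col B" C "dim_col C"]) (auto intro: carrier_matI)

lemma mmv1[simp]: "dim_row A = dim_row B \<Longrightarrow> dim_col A = dim_col B \<Longrightarrow> dim_vec v = dim_col A \<Longrightarrow> ((A::real mat) - B) *\<^sub>v v = A *\<^sub>v v - B *\<^sub>v v"
  by (rule minus_mult_distrib_mat_vec[of A "dim_row A" "dim_col A"]) (auto intro: carrier_matI carrier_vecI)

lemma mmv2[simp]: "dim_vec v = dim_col A \<Longrightarrow> dim_vec w = dim_col A \<Longrightarrow> (A::real mat) *\<^sub>v (v - w) = A *\<^sub>v v - A *\<^sub>v w"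
  by (rule mult_minus_distrib_mat_vec[of A "dim_row A" "dim_col A"]) (auto intro: carrier_matI carrier_vecI)

lemma mmv3[simp]: "dim_vec v = dim_col A \<Longrightarrow> (A::real mat) *\<^sub>v (- v) = - (A *\<^sub>v v)"
  by (intro eq_vecI) auto

lemma mmm1[simp]: "dim_row A = dim_row B \<Longrightarrow> dim_col A = dim_col B \<Longrightarrow> dim_row C = dim_col A \<Longrightarrow> ((A::real mat) - B) * C = A * C - B * C"
  by (rule minus_mult_distrib_mat[of A "dim_row A" "dim_col A"]) (auto intro: carrier_matI)

lemma mmm2[simp]: "dim_row B = dim_col A \<Longrightarrow> dim_row C = dim_col A \<Longrightarrow> dim_col B = dim_col C \<Longrightarrow> (A::real mat) * (B - C) = A * B - A * C"
  by (rule mult_minus_distrib_mat[of A "dim_row A" "dim_col A"]) (auto intro: carrier_matI)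

lemma char_poly_block_ut: assumes A1: "(A1::real mat) \<in> carrier_mat n n"
  and A2: "A2 \<in> carrier_mat n k" and A3: "A3 \<in> carrier_mat k k"
  shows "char_poly (four_block_mat A1 A2 (0\<^sub>m k n) A3) = char_poly A1 * char_poly A3"
proof -
  let ?cm = "\<lambda> A. [:0, 1:] \<cdot>\<^sub>m 1\<^sub>m (dim_row A) +
         map_mat (\<lambda>a. [:- a:]) A"
  let ?B2 = "map_mat (\<lambda>a. [:- a:]) A2"
  have "char_poly (four_block_mat A1 A2 (0\<^sub>m k n) A3) = det (?cm (four_block_mat A1 A2 (0\<^sub>m k n) A3))"
    unfolding char_poly_defs using A1 A3 by simp
  also have "?cm (four_block_mat A1 A2 (0\<^sub>m k n) A3) = four_block_mat (?cm A1) ?B2 (0\<^sub>m k n) (?cm A3)"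
    by (rule eq_matI, insert A1 A2 A3, auto simp: one_poly_def)
  also have "det \<dots> = det (?cm A1) * det (?cm A3)"
    by (rule det_four_block_mat_lower_left_zero[OF _ _ refl], insert A1 A2 A3, auto)
  also have "\<dots> = char_poly A1 * char_poly A3" unfolding char_poly_defs ..
  finally show ?thesis .
qed

lemma cspec_char: assumes A: "(A::real mat) \<in> carrier_mat n n"
  shows "cspec A = {z. poly (map_poly complex_of_real (char_poly A)) z = 0}"
proof -
  have mc: "map_mat complex_of_real A \<in> carrier_mat n n" using A by (rule map_carrier_mat[THEN iffD2])
  have cp: "char_poly (map_mat complex_of_real A) = map_poly complex_of_real (char_poly A)"
    by (rule of_real_hom.char_poly_hom[OF A])
  show ?thesis unfolding cspec_def eigenvalue_root_char_poly[OF mc] cp ..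
qed

lemma mp_mult: "map_poly complex_of_real (p*q) = map_poly complex_of_real p * map_poly complex_of_real q"
proof -
  interpret m: map_poly_comm_ring_hom complex_of_real ..
  show ?thesis by (rule m.hom_mult)
qed

theorem lemma5:
  fixes p m :: nat
    and P K H L :: "real mat"
    and Yd :: "real vec"
    and U N :: "nat \<Rightarrow> real vec"
    and Xh :: "nat \<Rightarrow> real vec"
    and Y E Ub D :: "nat \<Rightarrow> real vec"
  assumes P: "P \<in> carrier_mat p m"
    and K: "K \<in> carrier_mat m p"
    and H: "H \<in> carrier_mat m p"
    and L: "L \<in> carrier_mat (2*p) p"
    and Yd: "Yd \<in> carrier_vec p"
    and U: "\<And>k. U k \<in> carrier_vec m"
    and N: "\<And>k. N k \<in> carrier_vec p"
    and Y_def: "\<And>k. Y k = P *\<^sub>v U k + N k"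
    and E_def: "\<And>k. E k = Yd - Y k"
    and Ub_def: "\<And>k. Ub k = - (U (Suc k) - U k)"
    and D_def: "\<And>k. D k = - (N (Suc k) - N k)"
    and Xh0: "Xh 0 \<in> carrier_vec (2*p)"
    and ESO: "\<And>k. Xh (Suc k) = (Abar p - L * Cbar p) *\<^sub>v Xh k + Bbar p m P *\<^sub>v Ub k + L *\<^sub>v E k"
    and ctrl: "\<And>k. Ub k = - (K *\<^sub>v E k) - H *\<^sub>v (Fm p *\<^sub>v Xh k)"
  shows "(\<forall>k. E (Suc k) = E k + P *\<^sub>v Ub k + D k)
    \<and> (\<forall>k. E (Suc k) @\<^sub>v Xh (Suc k) = Gcl p m P K H L *\<^sub>v (E k @\<^sub>v Xh k) + (D k @\<^sub>v 0\<^sub>v (2*p)))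
    \<and> Tm p * Tinv p = 1\<^sub>m (3*p) \<and> Tinv p * Tm p = 1\<^sub>m (3*p)
    \<and> Tm p * Gcl p m P K H L * Tinv p
        = four_block_mat (1\<^sub>m p - P * K) (- (P * H * Fm p)) (0\<^sub>m (2*p) p) (Abar p - L * Cbar p)
    \<and> char_poly (Gcl p m P K H L) = char_poly (1\<^sub>m p - P * K) * char_poly (Abar p - L * Cbar p)
    \<and> cspec (Gcl p m P K H L) = cspec (1\<^sub>m p - P * K) \<union> cspec (Abar p - L * Cbar p)"
  proof -
  define C' where "C' = transpose_mat (Cbar p)"
  define G where "G = Gcl p m P K H L"
  define Bl where "Bl = four_block_mat (1\<^sub>m p - P * K) (- (P * H * Fm p)) (0\<^sub>m (2*p) p) (Abar p - L * Cbar p)"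
  have Cc[simp]: "Cbar p \<in> carrier_mat p (2*p)" by (simp add: Cbar_def)
  have Fc[simp]: "Fm p \<in> carrier_mat p (2*p)" by (simp add: Fm_def)
  have Ac[simp]: "Abar p \<in> carrier_mat (2*p) (2*p)" by (simp add: Abar_def mult_2)
  have Bc[simp]: "Bbar p m P \<in> carrier_mat (2*p) m" by (simp add: Bbar_def)
  have C'c[simp]: "C' \<in> carrier_mat (2*p) p" by (simp add: C'_def)
  note [simp] = P K H L Yd U N
  note vdims[simp] = carrier_vecD[OF Yd] carrier_vecD[OF U] carrier_vecD[OF N]
  note dims[simp] = carrier_matD[OF P] carrier_matD[OF K] carrier_matD[OF H] carrier_matD[OF L]
    carrier_matD[OF Cc] carrier_matD[OF Fc] carrier_matD[OF Ac] carrier_matD[OF Bc] carrier_matD[OF C'c]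
  have Ec[simp]: "E k \<in> carrier_vec p" for k unfolding E_def Y_def by (intro minus_carrier_vec add_carrier_vec mult_mat_vec_carrier[OF P U] N Yd)
  have Xc[simp]: "Xh k \<in> carrier_vec (2*p)" for k
  proof (induction k)
    case 0 then show ?case using Xh0 by simp
  next
    case (Suc k) then show ?case unfolding ESO by (intro carrier_vecI) (simp add: carrier_matD[OF L])
  qed
  have Ubc[simp]: "Ub k \<in> carrier_vec m" for k unfolding ctrl by (intro carrier_vecI) simp
  have Dc[simp]: "D k \<in> carrier_vec p" for k unfolding D_def by (intro carrier_vecI) (simp add: carrier_vecD[OF N])
  note vd2[simp] = carrier_vecD[OF Ec] carrier_vecD[OF Xc] carrier_vecD[OF Ubc] carrier_vecD[OF Dc]
  have PUb: "P *\<^sub>v Ub k = - (P *\<^sub>v (K *\<^sub>v E k)) - P *\<^sub>v (H *\<^sub>v (Fm p *\<^sub>v Xh k))" for k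
    unfolding ctrl
    by (subst mult_minus_distrib_mat_vec[of _ p m], auto simp: mult_uminus_mat_vec[of _ p m])
  have dyn: "E (Suc k) = E k + P *\<^sub>v Ub k + D k" for k
  proof -
    have "P *\<^sub>v Ub k = - (P *\<^sub>v U (Suc k) - P *\<^sub>v U k)"
      unfolding Ub_def
      by (subst mult_uminus_mat_vec[of _ p m], simp, simp,
          subst mult_minus_distrib_mat_vec[of _ p m], auto)
    then show ?thesis
      unfolding E_def Y_def D_def by (intro eq_vecI) auto
  qed
  have e1: "E (Suc k) = (1\<^sub>m p - P * K) *\<^sub>v E k + (- (P * H * Fm p)) *\<^sub>v Xh k + D k" for k
  proof -
    have "(1\<^sub>m p - P * K) *\<^sub>v E k = E k - P *\<^sub>v (K *\<^sub>v E k)"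
      by (subst minus_mult_distrib_mat_vec[of _ p p], auto)
    moreover have "(- (P * H * Fm p)) *\<^sub>v Xh k = - (P *\<^sub>v (H *\<^sub>v (Fm p *\<^sub>v Xh k)))"
      by simp
    ultimately show ?thesis unfolding dyn PUb by (intro eq_vecI) auto
  qed
  have e2: "Xh (Suc k) = (L - Bbar p m P * K) *\<^sub>v E k + (Abar p - L * Cbar p - Bbar p m P * H * Fm p) *\<^sub>v Xh k + 0\<^sub>v (2*p)" for k
  proof -
    have "(L - Bbar p m P * K) *\<^sub>v E k = L *\<^sub>v E k - Bbar p m P *\<^sub>v (K *\<^sub>v E k)"
      by (subst minus_mult_distrib_mat_vec[of _ "2*p" p], auto)
    moreover have "(Abar p - L * Cbar p - Bbar p m P * H * Fm p) *\<^sub>v Xh k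
       = Abar p *\<^sub>v Xh k - L *\<^sub>v (Cbar p *\<^sub>v Xh k) - Bbar p m P *\<^sub>v (H *\<^sub>v (Fm p *\<^sub>v Xh k))"
      by simp
    moreover have "(Abar p - L * Cbar p) *\<^sub>v Xh k = Abar p *\<^sub>v Xh k - L *\<^sub>v (Cbar p *\<^sub>v Xh k)"
      by (subst minus_mult_distrib_mat_vec[of _ "2*p" "2*p"], auto)
    moreover have "Bbar p m P *\<^sub>v Ub k = - (Bbar p m P *\<^sub>v (K *\<^sub>v E k)) - Bbar p m P *\<^sub>v (H *\<^sub>v (Fm p *\<^sub>v Xh k))"
      unfolding ctrl
      by (subst mult_minus_distrib_mat_vec[of _ "2*p" m], auto simp: mult_uminus_mat_vec[of _ "2*p" m])
    ultimately show ?thesis unfolding ESO by (intro eq_vecI) auto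
  qed
  have part2: "E (Suc k) @\<^sub>v Xh (Suc k) = G *\<^sub>v (E k @\<^sub>v Xh k) + (D k @\<^sub>v 0\<^sub>v (2*p))" for k
    unfolding G_def Gcl_def
    by (subst four_block_mat_mult_vec[of _ p p _ "2*p" _ "2*p"], auto simp: append_vec_add[of _ p _ _ "2*p"] e1[of k] e2[of k])
  have PKc: "P * K \<in> carrier_mat p p" using P K by (rule mult_carrier_mat)
  have A1c: "1\<^sub>m p - P * K \<in> carrier_mat p p" by (rule minus_carrier_mat[OF PKc])
  have PHFc: "P * H * Fm p \<in> carrier_mat p (2*p)" by (rule mult_carrier_mat[OF mult_carrier_mat[OF P H] Fc])
  have B1c: "- (P * H * Fm p) \<in> carrier_mat p (2*p)" by (rule uminus_carrier_mat[OF PHFc])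
  have BKc: "Bbar p m P * K \<in> carrier_mat (2*p) p" by (rule mult_carrier_mat[OF Bc K])
  have C1c: "L - Bbar p m P * K \<in> carrier_mat (2*p) p" by (rule minus_carrier_mat[OF BKc])
  have C2c: "C' - Bbar p m P * K \<in> carrier_mat (2*p) p" by (rule minus_carrier_mat[OF BKc])
  have BHFc: "Bbar p m P * H * Fm p \<in> carrier_mat (2*p) (2*p)" by (rule mult_carrier_mat[OF mult_carrier_mat[OF Bc H] Fc])
  have D1c: "Abar p - L * Cbar p - Bbar p m P * H * Fm p \<in> carrier_mat (2*p) (2*p)" by (rule minus_carrier_mat[OF BHFc])
  have LCc: "L * Cbar p \<in> carrier_mat (2*p) (2*p)" by (rule mult_carrier_mat[OF L Cc])
  have D2c: "Abar p - L * Cbar p \<in> carrier_mat (2*p) (2*p)" by (rule minus_carrier_mat[OF LCc])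
  have mC'c: "- C' \<in> carrier_mat (2*p) p" by (rule uminus_carrier_mat[OF C'c])
  have I1: "1\<^sub>m p \<in> carrier_mat p p" by (rule one_carrier_mat)
  have I2: "1\<^sub>m (2*p) \<in> carrier_mat (2*p) (2*p)" by (rule one_carrier_mat)
  have Z1: "0\<^sub>m p (2*p) \<in> carrier_mat p (2*p)" by (rule zero_carrier_mat)
  have Tinv_C': "Tinv p = four_block_mat (1\<^sub>m p) (0\<^sub>m p (2*p)) C' (1\<^sub>m (2*p))" unfolding Tinv_def C'_def ..
  have Tm_C': "Tm p = four_block_mat (1\<^sub>m p) (0\<^sub>m p (2*p)) (- C') (1\<^sub>m (2*p))" unfolding Tm_def C'_def ..
  have FC': "Fm p * C' = 0\<^sub>m p p" unfolding C'_def by (rule FC)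
  have CC': "Cbar p * C' = 1\<^sub>m p" unfolding C'_def by (rule CC)
  have AC': "Abar p * C' = C'" unfolding C'_def by (rule AC)
  have CP': "C' * P = Bbar p m P" unfolding C'_def using P by (rule CP)
  have PHFC: "P * H * Fm p * C' = 0\<^sub>m p p"
    using FC' by (subst assoc_mult_mat[of _ p p], auto)
  have BHFC: "Bbar p m P * H * Fm p * C' = 0\<^sub>m (2*p) p"
    using FC' by (subst assoc_mult_mat[of _ "2*p" p], auto)
  have LCC: "L * Cbar p * C' = L"
    using CC' by (subst assoc_mult_mat[of _ "2*p" p], auto)
  have b1: "(1\<^sub>m p - P * K) * 1\<^sub>m p + (- (P * H * Fm p)) * C' = 1\<^sub>m p - P * K"
    using PHFC by (intro eq_matI) auto
  have b2: "(1\<^sub>m p - P * K) * 0\<^sub>m p (2*p) + (- (P * H * Fm p)) * 1\<^sub>m (2*p) = - (P * H * Fm p)"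
    by (intro eq_matI) auto
  have D1C: "(Abar p - L * Cbar p - Bbar p m P * H * Fm p) * C' = C' - L - 0\<^sub>m (2*p) p"
    using AC' CC' FC' by simp
  have b3: "(L - Bbar p m P * K) * 1\<^sub>m p + (Abar p - L * Cbar p - Bbar p m P * H * Fm p) * C' = C' - Bbar p m P * K"
    unfolding D1C by (intro eq_matI) auto
  have b4: "(L - Bbar p m P * K) * 0\<^sub>m p (2*p) + (Abar p - L * Cbar p - Bbar p m P * H * Fm p) * 1\<^sub>m (2*p)
     = Abar p - L * Cbar p - Bbar p m P * H * Fm p"
    by (intro eq_matI) auto
  have GT: "G * Tinv p = four_block_mat (1\<^sub>m p - P * K) (- (P * H * Fm p)) (C' - Bbar p m P * K) (Abar p - L * Cbar p - Bbar p m P * H * Fm p)"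
  proof -
    have "G * Tinv p = four_block_mat
      ((1\<^sub>m p - P * K) * 1\<^sub>m p + (- (P * H * Fm p)) * C')
      ((1\<^sub>m p - P * K) * 0\<^sub>m p (2*p) + (- (P * H * Fm p)) * 1\<^sub>m (2*p))
      ((L - Bbar p m P * K) * 1\<^sub>m p + (Abar p - L * Cbar p - Bbar p m P * H * Fm p) * C')
      ((L - Bbar p m P * K) * 0\<^sub>m p (2*p) + (Abar p - L * Cbar p - Bbar p m P * H * Fm p) * 1\<^sub>m (2*p))"
      unfolding G_def Gcl_def Tinv_C' by (rule mult_four_block_mat[OF A1c B1c C1c D1c I1 Z1 C'c I2])
    then show ?thesis by (simp only: b1 b2 b3 b4)
  qed
  have C'PK: "- C' * (1\<^sub>m p - P * K) = - (C' - Bbar p m P * K)"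
  proof -
    have "C' * (P * K) = Bbar p m P * K" unfolding assoc_mult_mat[OF C'c P K, symmetric] CP' ..
    then show ?thesis
      unfolding uminus_mult_left_mat uminus_eq_mat mult_minus_distrib_mat[OF C'c I1 PKc] right_mult_one_mat[OF C'c]
      by (intro eq_matI) auto
  qed
  have c3: "- C' * (1\<^sub>m p - P * K) + 1\<^sub>m (2*p) * (C' - Bbar p m P * K) = 0\<^sub>m (2*p) p"
    unfolding C'PK by (intro eq_matI) auto
  have C'PHF: "C' * (P * H * Fm p) = Bbar p m P * H * Fm p"
    unfolding assoc_mult_mat[OF P H Fc] assoc_mult_mat[OF C'c P mult_carrier_mat[OF H Fc], symmetric] CP' assoc_mult_mat[OF Bc H Fc] ..
  have c4: "- C' * (- (P * H * Fm p)) + 1\<^sub>m (2*p) * (Abar p - L * Cbar p - Bbar p m P * H * Fm p) = Abar p - L * Cbar p"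
  proof -
    have e: "- C' * (- (P * H * Fm p)) = Bbar p m P * H * Fm p"
    proof -
      have d1: "dim_col C' = dim_row (- (P * H * Fm p))" using C'c B1c by simp
      have d2: "dim_col C' = dim_row (P * H * Fm p)" using C'c PHFc by simp
      show ?thesis by (simp only: uminus_mult_left_mat[OF d1] uminus_mult_right_mat[OF d2] uminus_uminus_mat C'PHF)
    qed
    show ?thesis unfolding e by (intro eq_matI) auto
  qed
  have c1: "1\<^sub>m p * (1\<^sub>m p - P * K) + 0\<^sub>m p (2*p) * (C' - Bbar p m P * K) = 1\<^sub>m p - P * K"
    by (intro eq_matI) auto
  have c2: "1\<^sub>m p * (- (P * H * Fm p)) + 0\<^sub>m p (2*p) * (Abar p - L * Cbar p - Bbar p m P * H * Fm p) = - (P * H * Fm p)"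
    by (intro eq_matI) auto
  have Gc: "G \<in> carrier_mat (p + 2*p) (p + 2*p)" unfolding G_def Gcl_def by auto
  have Tc: "Tm p \<in> carrier_mat (p + 2*p) (p + 2*p)" unfolding Tm_def by auto
  have Tic: "Tinv p \<in> carrier_mat (p + 2*p) (p + 2*p)" unfolding Tinv_def by auto
  have Blc: "Bl \<in> carrier_mat (p + 2*p) (p + 2*p)" unfolding Bl_def by auto
  have TGT: "Tm p * G * Tinv p = Bl"
  proof -
    have "Tm p * (G * Tinv p) = four_block_mat
      (1\<^sub>m p * (1\<^sub>m p - P * K) + 0\<^sub>m p (2*p) * (C' - Bbar p m P * K))
      (1\<^sub>m p * (- (P * H * Fm p)) + 0\<^sub>m p (2*p) * (Abar p - L * Cbar p - Bbar p m P * H * Fm p))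
      (- C' * (1\<^sub>m p - P * K) + 1\<^sub>m (2*p) * (C' - Bbar p m P * K))
      (- C' * (- (P * H * Fm p)) + 1\<^sub>m (2*p) * (Abar p - L * Cbar p - Bbar p m P * H * Fm p))"
      unfolding GT Tm_C' by (rule mult_four_block_mat[OF I1 Z1 mC'c I2 A1c B1c C2c D1c])
    then show ?thesis unfolding assoc_mult_mat[OF Tc Gc Tic] Bl_def by (simp only: c1 c2 c3 c4)
  qed
  have n3: "3 * p = p + 2 * p" by simp
  have TTi: "Tm p * Tinv p = 1\<^sub>m (3*p)"
  proof -
    have "Tm p * Tinv p = four_block_mat
      (1\<^sub>m p * 1\<^sub>m p + 0\<^sub>m p (2*p) * C') (1\<^sub>m p * 0\<^sub>m p (2*p) + 0\<^sub>m p (2*p) * 1\<^sub>m (2*p))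
      (- C' * 1\<^sub>m p + 1\<^sub>m (2*p) * C') (- C' * 0\<^sub>m p (2*p) + 1\<^sub>m (2*p) * 1\<^sub>m (2*p))"
      unfolding Tm_C' Tinv_C' by (rule mult_four_block_mat[OF I1 Z1 mC'c I2 I1 Z1 C'c I2])
    also have "\<dots> = four_block_mat (1\<^sub>m p) (0\<^sub>m p (2*p)) (0\<^sub>m (2*p) p) (1\<^sub>m (2*p))"
      by (intro arg_cong4[where f = four_block_mat] eq_matI) auto
    finally show ?thesis unfolding n3 by simp
  qed
  have TiT: "Tinv p * Tm p = 1\<^sub>m (3*p)"
  proof -
    have "Tinv p * Tm p = four_block_mat
      (1\<^sub>m p * 1\<^sub>m p + 0\<^sub>m p (2*p) * - C') (1\<^sub>m p * 0\<^sub>m p (2*p) + 0\<^sub>m p (2*p) * 1\<^sub>m (2*p))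
      (C' * 1\<^sub>m p + 1\<^sub>m (2*p) * - C') (C' * 0\<^sub>m p (2*p) + 1\<^sub>m (2*p) * 1\<^sub>m (2*p))"
      unfolding Tm_C' Tinv_C' by (rule mult_four_block_mat[OF I1 Z1 C'c I2 I1 Z1 mC'c I2])
    also have "\<dots> = four_block_mat (1\<^sub>m p) (0\<^sub>m p (2*p)) (0\<^sub>m (2*p) p) (1\<^sub>m (2*p))"
      by (intro arg_cong4[where f = four_block_mat] eq_matI) auto
    finally show ?thesis unfolding n3 by simp
  qed
  have Geq: "G = Tinv p * Bl * Tm p"
  proof -
    have "Tinv p * Bl * Tm p = (Tinv p * Tm p) * G * (Tinv p * Tm p)"
      unfolding TGT[symmetric] using Tc Gc Tic by (simp add: assoc_mult_mat[of _ "p+2*p" "p+2*p"])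
    also have "\<dots> = G" unfolding TiT n3 using Gc by simp
    finally show ?thesis by simp
  qed
  have TiT': "Tinv p * Tm p = 1\<^sub>m (p + 2*p)" using TiT unfolding n3 .
  have TTi': "Tm p * Tinv p = 1\<^sub>m (p + 2*p)" using TTi unfolding n3 .
  have dG: "dim_row G = p + 2*p" using Gc by (rule carrier_matD)
  have sim: "similar_mat G Bl"
    unfolding similar_mat_def similar_mat_wit_def Let_def dG insert_subset
    using Gc Blc Tc Tic TiT' TTi' Geq by blast
  have cp: "char_poly G = char_poly (1\<^sub>m p - P * K) * char_poly (Abar p - L * Cbar p)"
    unfolding char_poly_similar[OF sim] Bl_def
    by (rule char_poly_block_ut[OF A1c B1c D2c])
  have sp: "cspec G = cspec (1\<^sub>m p - P * K) \<union> cspec (Abar p - L * Cbar p)"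
    unfolding cspec_char[OF Gc] cspec_char[OF A1c] cspec_char[OF D2c] cp
    unfolding mp_mult poly_mult mult_eq_0_iff Collect_disj_eq ..
  show ?thesis
    using dyn part2 TTi TiT TGT cp sp unfolding G_def Bl_def by blast
qed

end
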